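(* Let $m/n\in(0,1/2)$ with $m>1$, let $u/v=\mathrm{LFP}(m/n)$, and let $k\in[0,m-2]\setminus R_{m/n}$. Then $k\in\mathcal A_{m/n}$ if and only if $\psi_{m/n}(k)\in\mathcal A_{u/v}$.
   Context: Rationals in lowest terms; $\mathrm{LFP}(h/k)$ is the element immediately preceding $h/k$ in the increasing list of rationals in $[0,1/2]$ with denominator at most $k$. $+_n$ is addition mod $n$ on $\mathbb Z_n=\{0,\dots,n-1\}$; $\mathcal O_{m/n}[r,s]=\{r+_njm\colon 0\le j\le K\}$ with $K\ge0$ least such that $r+_nKm=s$; $[a,b]=\{a,\dots,b\}$. An integer $k\in[0,m-1]$ is $m/n$-admissible if $[k+1,m-1]\cap\mathcal O_{m/n}[k,0]=\emptyset$; $\mathcal A_{m/n}$ is the set of $m/n$-admissible integers (and similarly $\mathcal A_{u/v}\subseteq[0,u-1]$). $R_{m/n}=\mathcal O_{m/n}[m,n-1]$, and $\psi_{m/n}\colon\mathbb Z_n\to\mathbb Z_v$ is $\psi_{m/n}(k)=k-\#(R_{m/n}\cap[0,k])$. *)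

theory Defs
  imports Main
begin

definition orbit :: "nat \<Rightarrow> nat \<Rightarrow> nat \<Rightarrow> nat \<Rightarrow> nat set" where
  "orbit m n r s =
     (let K = (LEAST K. (r + K * m) mod n = s) in {(r + j * m) mod n | j. j \<le> K})"

definition admissible :: "nat \<Rightarrow> nat \<Rightarrow> nat \<Rightarrow> bool" where
  "admissible m n k \<longleftrightarrow> k < m \<and> {k+1..<m} \<inter> orbit m n k 0 = {}"

definition Rset :: "nat \<Rightarrow> nat \<Rightarrow> nat set" where
  "Rset m n = orbit m n m (n - 1)"

definition psi :: "nat \<Rightarrow> nat \<Rightarrow> nat \<Rightarrow> nat" where
  "psi m n k = k - card (Rset m n \<inter> {0..k})"

text \<open>u/v (lowest terms) is the element immediately preceding m/n in the increasing list
  of rationals in [0,1/2] with denominator at most n.\<close>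
definition is_LFP :: "nat \<Rightarrow> nat \<Rightarrow> nat \<Rightarrow> nat \<Rightarrow> bool" where
  "is_LFP m n u v \<longleftrightarrow> coprime u v \<and> 0 < v \<and> v \<le> n \<and> 2 * u \<le> v \<and> u * n < m * v \<and>
     (\<forall>h d. 0 < d \<and> d \<le> n \<and> 2 * h \<le> d \<and> h * n < m * d \<longrightarrow> h * v \<le> u * d)"

end

theory Submission
  imports Defs
begin


lemma inverse_exists:
  fixes m n :: nat
  assumes "coprime m n" "1 < n" "0 < m"
  shows "\<exists>d h. 0 < d \<and> d < n \<and> m * d = h * n + 1"
proof -
  obtain x y where xy: "m * x = n * y + 1"
    using bezout_nat[of m n] assms by auto
  define d where "d = x mod n"
  have "m * x mod n = (1 + n * y) mod n" using xy by simp
  also have "\<dots> = 1 mod n" by (rule mod_mult_self2)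
  also have "\<dots> = 1" using assms(2) by simp
  finally have "m * x mod n = 1" .
  hence md: "m * d mod n = 1" unfolding d_def by (simp add: mod_mult_right_eq)
  have "d \<noteq> 0" using md assms(2) by (metis mult_0_right mod_0 zero_neq_one)
  moreover have "d < n" using assms(2) d_def by simp
  moreover have "m * d = (m * d div n) * n + 1" using md
    by (metis div_mult_mod_eq)
  ultimately show ?thesis by blast
qed

lemma farey:
  fixes m n u v :: nat
  assumes cop: "coprime m n" and m1: "1 < m" and mn: "2*m < n" and L: "is_LFP m n u v"
  shows "m * v = u * n + 1"
proof -
  obtain d h where d: "0 < d" "d < n" and mdh: "m * d = h * n + 1"
    using inverse_exists[of m n] cop m1 mn by auto
  have Lc: "coprime u v" "0 < v" "v \<le> n" "2*u \<le> v" "u*n < m*v"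
    and Lmax: "\<And>h d. 0 < d \<Longrightarrow> d \<le> n \<Longrightarrow> 2 * h \<le> d \<Longrightarrow> h * n < m * d \<Longrightarrow> h * v \<le> u * d"
    using L unfolding is_LFP_def by blast+
  have "2 * h \<le> d"
  proof (rule ccontr)
    assume "\<not> 2 * h \<le> d"
    hence "d + 1 \<le> 2 * h" by simp
    hence "(d+1) * n \<le> 2 * h * n" by (rule mult_right_mono) simp
    moreover have "2 * m * d \<le> (n - 1) * d" using mn by (intro mult_right_mono) auto
    moreover have "(n-1)*d < n * d" using d by simp
    ultimately show False using mdh by (simp add: algebra_simps)
  qed
  hence hv: "h * v \<le> u * d" using Lmax[of d h] d mdh by simp
  define a where "a = int u * int d - int h * int v"
  define b where "b = int m * int v - int u * int n"
  have a0: "a \<ge> 0" using hv unfolding a_def by (metis of_nat_le_iff of_nat_mult diff_ge_0_iff_ge)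
  have b1: "b \<ge> 1" using Lc(5) unfolding b_def
    by (metis of_nat_less_iff of_nat_mult zless_imp_add1_zle add.commute le_diff_eq)
  have mdh': "int m * int d - int h * int n = 1" using mdh
    by (metis add_diff_cancel_left' add.commute of_nat_1 of_nat_add of_nat_mult)
  have eq: "int v = int n * a + int d * b"
  proof -
    have "int v = int v * (int m * int d - int h * int n)" using mdh' by simp
    also have "\<dots> = int n * a + int d * b" unfolding a_def b_def by (simp add: algebra_simps)
    finally show ?thesis .
  qed
  have a00: "a = 0"
  proof (rule ccontr)
    assume "a \<noteq> 0"
    hence "a \<ge> 1" using a0 by simp
    hence "int n * a \<ge> int n * 1" by (intro mult_left_mono) auto
    moreover have "int d * b \<ge> int d" using b1 d by simp
    ultimately have "int v \<ge> int n + int d" using eq by linarith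
    thus False using Lc(3) d by linarith
  qed
  hence vdb: "int v = int d * b" using eq by simp
  have "int u * int d = int h * int v" using a00 a_def by simp
  hence "int u * int d = int h * b * int d" using vdb by (simp add: algebra_simps)
  hence uhb: "int u = int h * b" using d by simp
  have "b dvd int u" "b dvd int v" using uhb vdb by simp_all
  hence "is_unit b" using Lc(1) by (metis coprime_common_divisor coprime_int_iff)
  hence "b = 1" using b1 by simp
  hence "int (m * v) = int (u * n + 1)" unfolding b_def by simp
  thus ?thesis by (simp only: of_nat_eq_iff)
qed



lemma modI: fixes a r q b :: int
  assumes "0 \<le> r" "r < b" "a = r + q * b" shows "a mod b = r"
  using assms by simp

lemma orbit_gen:
  fixes e :: "nat \<Rightarrow> nat"
  assumes step: "\<And>j. 0 < j \<Longrightarrow> j \<le> I \<Longrightarrow> (e j + s) mod N = e (j - 1)"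
    and lt: "e I < N" and inj: "inj_on e {..I}" and J: "J \<le> I"
  shows "orbit s N (e I) (e J) = e ` {J..I}"
proof -
  have it: "(e I + j * s) mod N = e (I - j)" if "j \<le> I" for j
    using that
  proof (induction j)
    case 0 then show ?case using lt by simp
  next
    case (Suc j)
    have "(e I + Suc j * s) mod N = ((e I + j * s) + s) mod N" by (simp add: algebra_simps)
    also have "\<dots> = ((e I + j * s) mod N + s) mod N" by (simp add: mod_add_left_eq)
    also have "\<dots> = (e (I - j) + s) mod N" using Suc by simp
    also have "\<dots> = e (I - j - 1)" using Suc by (intro step) auto
    finally show ?case by simp
  qed
  have L: "(LEAST K. (e I + K * s) mod N = e J) = I - J"
  proof (rule Least_equality)
    show "(e I + (I - J) * s) mod N = e J" using it[of "I - J"] J by simp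
  next
    fix K assume K: "(e I + K * s) mod N = e J"
    show "I - J \<le> K"
    proof (rule ccontr)
      assume "\<not> I - J \<le> K"
      hence "K \<le> I" "I - K \<noteq> J" by auto
      hence "e (I - K) = e J" using it K by simp
      hence "I - K = J" using inj J by (auto dest: inj_onD)
      thus False using \<open>I - K \<noteq> J\<close> by simp
    qed
  qed
  have "{(e I + j * s) mod N | j. j \<le> I - J} = e ` {J..I}"
  proof
    show "{(e I + j * s) mod N | j. j \<le> I - J} \<subseteq> e ` {J..I}"
      using it J by force
  next
    show "e ` {J..I} \<subseteq> {(e I + j * s) mod N | j. j \<le> I - J}"
    proof
      fix y assume "y \<in> e ` {J..I}"
      then obtain l where l: "J \<le> l" "l \<le> I" "y = e l" by auto
      hence "y = (e I + (I - l) * s) mod N" using it[of "I - l"] by simp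
      thus "y \<in> {(e I + j * s) mod N | j. j \<le> I - J}" using l by auto
    qed
  qed
  thus ?thesis unfolding orbit_def L Let_def by simp
qed

locale S =
  fixes m n u v :: nat
  assumes key: "m * v = u * n + 1" and u1: "1 \<le> u" and v2u: "2 * u \<le> v" and vn: "v < n"
    and m1: "1 < m" and mn: "2 * m < n" and cuv: "coprime u v"
begin

definition c :: "nat \<Rightarrow> nat" where "c i = nat ((- (int i * int m)) mod int n)"
definition d :: "nat \<Rightarrow> nat" where "d i = nat ((- (int i * int u)) mod int v)"

lemma npos: "0 < n" using mn by simp
lemma vpos: "0 < v" using u1 v2u by simp
lemma key_int: "int m * int v = int u * int n + 1"
  using key by (metis of_nat_1 of_nat_add of_nat_mult)

lemma c_int: "int (c i) = (- (int i * int m)) mod int n"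
  unfolding c_def using npos by simp
lemma d_int: "int (d i) = (- (int i * int u)) mod int v"
  unfolding d_def using vpos by simp
lemma c_lt: "c i < n"
proof -
  have "int (c i) < int n" using c_int npos by simp
  thus ?thesis by simp
qed
lemma d_lt: "d i < v"
proof -
  have "int (d i) < int v" using d_int vpos by simp
  thus ?thesis by simp
qed

lemma c_step: assumes "0 < i" shows "(c i + m) mod n = c (i - 1)"
proof -
  have "int ((c i + m) mod n) = (int (c i) + int m) mod int n" by (simp add: zmod_int)
  also have "\<dots> = ((- (int i * int m)) mod int n + int m) mod int n" using c_int by simp
  also have "\<dots> = (- (int i * int m) + int m) mod int n" by (simp add: mod_add_left_eq)
  also have "\<dots> = (- (int (i - 1) * int m)) mod int n" using assms by (simp add: of_nat_diff algebra_simps)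
  also have "\<dots> = int (c (i - 1))" using c_int by simp
  finally show ?thesis by simp
qed

lemma d_step: assumes "0 < i" shows "(d i + u) mod v = d (i - 1)"
proof -
  have "int ((d i + u) mod v) = (int (d i) + int u) mod int v" by (simp add: zmod_int)
  also have "\<dots> = ((- (int i * int u)) mod int v + int u) mod int v" using d_int by simp
  also have "\<dots> = (- (int i * int u) + int u) mod int v" by (simp add: mod_add_left_eq)
  also have "\<dots> = (- (int (i - 1) * int u)) mod int v" using assms by (simp add: of_nat_diff algebra_simps)
  also have "\<dots> = int (d (i - 1))" using d_int by simp
  finally show ?thesis by simp
qed

lemma c_dec: "int (c i) = - (int i * int m) - ((- (int i * int m)) div int n) * int n"
  using c_int minus_div_mult_eq_mod[of "- (int i * int m)" "int n"] by simp
lemma d_dec: "int (d i) = - (int i * int u) - ((- (int i * int u)) div int v) * int v"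
  using d_int minus_div_mult_eq_mod[of "- (int i * int u)" "int v"] by simp

lemma vc_dvd: "int n dvd int v * int (c i) + int i"
proof -
  define q where "q = (- (int i * int m)) div int n"
  have "int v * int (c i) + int i = int v * (- (int i * int m) - q * int n) + int i"
    using c_dec q_def by simp
  also have "\<dots> = - (int i * (int m * int v)) + int i - int v * q * int n" by (simp add: algebra_simps)
  also have "\<dots> = int n * (- (int i * int u) - int v * q)" unfolding key_int by (simp add: algebra_simps)
  finally show ?thesis by simp
qed

lemma K: assumes "i < v" shows "n * d i = v * c i + i"
proof -
  define q1 where "q1 = (- (int i * int m)) div int n"
  define q2 where "q2 = (- (int i * int u)) div int v"
  define C where "C = int (c i)"
  define D where "D = int (d i)"
  have C: "C = - (int i * int m) - q1 * int n" using c_dec C_def q1_def by simp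
  have D: "D = - (int i * int u) - q2 * int v" using d_dec D_def q2_def by simp
  have eq: "int n * D = int v * C + int i + (int n * int v) * (q1 - q2)"
  proof -
    have "int n * D = - (int i * (int u * int n)) - q2 * (int n * int v)" unfolding D by (simp add: algebra_simps)
    also have "\<dots> = - (int i * (int m * int v)) + int i - q2 * (int n * int v)" using key_int by (simp add: algebra_simps)
    also have "\<dots> = int v * C + int i + (int n * int v) * (q1 - q2)" unfolding C by (simp add: algebra_simps)
    finally show ?thesis .
  qed
  have D0: "0 \<le> D" and Dv: "D + 1 \<le> int v" using D_def d_lt[of i] by auto
  have C0: "0 \<le> C" and Cn: "C + 1 \<le> int n" using C_def c_lt[of i] by auto
  have b1: "0 \<le> int n * D" using D0 by simp
  have b2: "int n * (D + 1) \<le> int n * int v" using Dv by (intro mult_left_mono) auto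
  have b3: "0 \<le> int v * C" using C0 by simp
  have b4: "int v * (C + 1) \<le> int v * int n" using Cn by (intro mult_left_mono) auto
  have "q1 - q2 = 0"
  proof (rule ccontr)
    assume ne: "q1 - q2 \<noteq> 0"
    show False
    proof (cases "q1 - q2 > 0")
      case True
      hence "(int n * int v) * 1 \<le> (int n * int v) * (q1 - q2)" by (intro mult_left_mono) auto
      thus False using eq b2 b3 npos by (simp add: algebra_simps)
    next
      case False
      hence "(int n * int v) * (q1 - q2) \<le> (int n * int v) * (-1)" using ne by (intro mult_left_mono) auto
      thus False using eq b1 b4 assms by (simp add: algebra_simps)
    qed
  qed
  hence "int n * D = int v * C + int i" using eq by simp
  hence "int (n * d i) = int (v * c i + i)" unfolding C_def D_def by simp
  thus ?thesis by (simp only: of_nat_eq_iff)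
qed

end


context S begin

lemma c0: "c 0 = 0" unfolding c_def by simp
lemma d0: "d 0 = 0" unfolding d_def by simp

lemma c_vm1: "c (v - 1) = m - 1"
proof -
  have "int (c (v - 1)) = (- (int (v - 1) * int m)) mod int n" by (rule c_int)
  also have "\<dots> = int m - 1"
  proof (rule modI[where q = "- int u"])
    show "0 \<le> int m - 1" using m1 by simp
    show "int m - 1 < int n" using mn by simp
    show "- (int (v - 1) * int m) = int m - 1 + - int u * int n"
      using vpos key_int by (simp add: of_nat_diff algebra_simps)
  qed
  finally show ?thesis using m1 by simp
qed

lemma c_v: "c v = n - 1"
proof -
  have "int (c v) = (- (int v * int m)) mod int n" by (rule c_int)
  also have "\<dots> = int n - 1"
  proof (rule modI[where q = "- int u - 1"])
    show "0 \<le> int n - 1" using npos by simp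
    show "int n - 1 < int n" by simp
    show "- (int v * int m) = int n - 1 + (- int u - 1) * int n"
      using key_int by (simp add: algebra_simps)
  qed
  finally show ?thesis using npos by simp
qed

lemma c_nm1: "c (n - 1) = m"
proof -
  have "int (c (n - 1)) = (- (int (n - 1) * int m)) mod int n" by (rule c_int)
  also have "\<dots> = int m"
  proof (rule modI[where q = "- int m"])
    show "0 \<le> int m" by simp
    show "int m < int n" using mn by simp
    show "- (int (n - 1) * int m) = int m + - int m * int n"
      using npos by (simp add: of_nat_diff algebra_simps)
  qed
  finally show ?thesis by simp
qed

lemma uv: "u < v" using u1 v2u by simp

lemma d_vm1: "d (v - 1) = u"
proof -
  have "int (d (v - 1)) = (- (int (v - 1) * int u)) mod int v" by (rule d_int)
  also have "\<dots> = int u"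
  proof (rule modI[where q = "- int u"])
    show "0 \<le> int u" by simp
    show "int u < int v" using uv by simp
    show "- (int (v - 1) * int u) = int u + - int u * int v"
      using vpos by (simp add: of_nat_diff algebra_simps)
  qed
  finally show ?thesis by simp
qed

lemma c_inj: "inj_on c {..<n}"
proof (rule inj_onI)
  fix i j assume i: "i \<in> {..<n}" and j: "j \<in> {..<n}" and e: "c i = c j"
  have "int n dvd (int v * int (c i) + int i) - (int v * int (c j) + int j)"
    using vc_dvd[of i] vc_dvd[of j] by (rule dvd_diff)
  hence "int n dvd int i - int j" using e by simp
  hence "int i mod int n = int j mod int n" by (simp add: mod_eq_dvd_iff)
  thus "i = j" using i j by simp
qed

lemma d_inj: "inj_on d {..<v}"
proof (rule inj_onI)
  fix i j assume i: "i \<in> {..<v}" and j: "j \<in> {..<v}" and e: "d i = d j"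
  have "(v * c i + i) mod v = (v * c j + j) mod v" using K[of i] K[of j] i j e by simp
  thus "i = j" using i j by simp
qed

lemma c_img: "c ` {..<n} = {..<n}"
  using c_lt c_inj by (intro endo_inj_surj) auto
lemma d_img: "d ` {..<v} = {..<v}"
  using d_lt d_inj by (intro endo_inj_surj) auto

lemma Rset_eq: "Rset m n = c ` {v..n - 1}"
proof -
  have "Rset m n = orbit m n (c (n - 1)) (c v)" unfolding Rset_def c_v c_nm1 ..
  also have "\<dots> = c ` {v..n - 1}"
  proof (rule orbit_gen)
    show "\<And>j. 0 < j \<Longrightarrow> j \<le> n - 1 \<Longrightarrow> (c j + m) mod n = c (j - 1)" by (rule c_step)
    show "c (n - 1) < n" by (rule c_lt)
    show "inj_on c {..n - 1}" using c_inj npos by (metis Suc_pred' lessThan_Suc_atMost)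
    show "v \<le> n - 1" using vn by simp
  qed
  finally show ?thesis .
qed

lemma ord1: assumes "i < v" "j < v" "c i < c j" shows "d i < d j"
proof -
  have "n * d i = v * c i + i" using K assms by simp
  also have "\<dots> < v * (c i + 1)" using assms by simp
  also have "\<dots> \<le> v * c j" using assms by (intro mult_left_mono) auto
  also have "\<dots> \<le> n * d j" using K[of j] assms by simp
  finally show ?thesis by simp
qed

lemma ord_iff: assumes "i < v" "j < v" shows "c i < c j \<longleftrightarrow> d i < d j"
proof
  assume "c i < c j" thus "d i < d j" using ord1 assms by blast
next
  assume dl: "d i < d j"
  show "c i < c j"
  proof (rule ccontr)
    assume "\<not> c i < c j"
    hence "c j = c i \<or> c j < c i" by auto
    thus False
    proof
      assume "c j = c i"
      hence "j = i" using c_inj assms vn by (auto dest: inj_onD)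
      thus False using dl by simp
    next
      assume "c j < c i" thus False using ord1[of j i] assms dl by simp
    qed
  qed
qed

lemma le_iff: assumes "i < v" "j < v" shows "c i \<le> c j \<longleftrightarrow> d i \<le> d j"
  using ord_iff[of j i] assms by linarith

lemma psi_c: assumes iv: "i < v" shows "psi m n (c i) = d i"
proof -
  define x where "x = c i"
  define A where "A = c ` {..<v}"
  have un: "{..<n} = Rset m n \<union> A" unfolding Rset_eq A_def
  proof -
    have "{..<n} = {..<v} \<union> {v..n-1}" using vn by auto
    thus "{..<n} = c ` {v..n - 1} \<union> c ` {..<v}" using c_img by (metis image_Un sup_commute)
  qed
  have dj: "Rset m n \<inter> A = {}" unfolding Rset_eq A_def
  proof -
    have "c ` {v..n-1} \<inter> c ` {..<v} = c ` ({v..n-1} \<inter> {..<v})"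
      using c_inj vn by (intro inj_on_image_Int[symmetric]) auto
    thus "c ` {v..n - 1} \<inter> c ` {..<v} = {}" by auto
  qed
  have xn: "x < n" using c_lt x_def by simp
  have "{0..x} \<subseteq> {..<n}" using xn by auto
  hence "{0..x} \<subseteq> Rset m n \<union> A" using un by simp
  hence "{0..x} = (Rset m n \<inter> {0..x}) \<union> (A \<inter> {0..x})" by blast
  hence "card {0..x} = card ((Rset m n \<inter> {0..x}) \<union> (A \<inter> {0..x}))" by simp
  also have "\<dots> = card (Rset m n \<inter> {0..x}) + card (A \<inter> {0..x})"
    by (rule card_Un_disjoint) (use dj in auto)
  finally have "card {0..x} = card (Rset m n \<inter> {0..x}) + card (A \<inter> {0..x})" .
  hence cs: "x + 1 = card (Rset m n \<inter> {0..x}) + card (A \<inter> {0..x})" by simp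
  have "A \<inter> {0..x} = c ` {l \<in> {..<v}. c l \<le> c i}" unfolding A_def x_def by auto
  moreover have "card (c ` {l \<in> {..<v}. c l \<le> c i}) = card {l \<in> {..<v}. c l \<le> c i}"
    by (rule card_image, rule inj_on_subset[OF c_inj]) (use vn in auto)
  ultimately have "card (A \<inter> {0..x}) = card {l \<in> {..<v}. c l \<le> c i}" by simp
  also have "{l \<in> {..<v}. c l \<le> c i} = {l \<in> {..<v}. d l \<le> d i}" using le_iff iv by auto
  also have "card {l \<in> {..<v}. d l \<le> d i} = card (d ` {l \<in> {..<v}. d l \<le> d i})"
    using d_inj by (intro card_image[symmetric]) (auto intro: inj_on_subset)
  also have "d ` {l \<in> {..<v}. d l \<le> d i} = {..d i}"
  proof -
    have "d ` {l \<in> {..<v}. d l \<le> d i} = {y \<in> d ` {..<v}. y \<le> d i}" by auto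
    also have "\<dots> = {..d i}" using d_img d_lt[of i] by auto
    finally show ?thesis .
  qed
  finally have "card (A \<inter> {0..x}) = d i + 1" by simp
  hence "card (Rset m n \<inter> {0..x}) = x - d i" "d i \<le> x" using cs by auto
  thus ?thesis unfolding psi_def x_def by simp
qed

end


lemma disj_img: "({a+1..<b} \<inter> f ` X = {}) \<longleftrightarrow> (\<forall>j\<in>X. \<not> (a < f j \<and> f j < (b::nat)))"
proof
  assume h: "{a+1..<b} \<inter> f ` X = {}"
  show "\<forall>j\<in>X. \<not> (a < f j \<and> f j < b)"
  proof (intro ballI notI)
    fix j assume "j \<in> X" "a < f j \<and> f j < b"
    hence "f j \<in> {a+1..<b} \<inter> f ` X" by auto
    thus False using h by (simp only: empty_iff)
  qed
qed auto

context S begin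

lemma adm_c: assumes iv: "i < v" and ne: "i \<noteq> v - 1"
  shows "admissible m n (c i) \<longleftrightarrow> admissible u v (d i)"
proof -
  have injc: "inj_on c {..i}" by (rule inj_on_subset[OF c_inj]) (use iv vn in auto)
  have injd: "inj_on d {..i}" by (rule inj_on_subset[OF d_inj]) (use iv in auto)
  have oc: "orbit m n (c i) (c 0) = c ` {0..i}"
    by (rule orbit_gen[OF c_step c_lt injc]) auto
  have od: "orbit u v (d i) (d 0) = d ` {0..i}"
    by (rule orbit_gen[OF d_step d_lt injd]) auto
  have vv: "v - 1 < v" using vpos by simp
  have key1: "c j < m \<longleftrightarrow> d j < u" if j: "j \<le> i" for j
  proof -
    have jv: "j < v" "j \<noteq> v - 1" using j iv ne by auto
    have "c j \<noteq> c (v - 1)"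
    proof
      assume "c j = c (v - 1)"
      hence "j = v - 1" using c_inj jv vv vn by (auto dest: inj_onD)
      thus False using jv by simp
    qed
    hence "c j < m \<longleftrightarrow> c j < c (v - 1)" using c_vm1 m1 by auto
    also have "\<dots> \<longleftrightarrow> d j < d (v - 1)" using ord_iff jv vv by blast
    finally show ?thesis using d_vm1 by simp
  qed
  have key2: "c i < c j \<longleftrightarrow> d i < d j" if j: "j \<le> i" for j
    using ord_iff[of i j] j iv by simp
  have "admissible m n (c i) \<longleftrightarrow> c i < m \<and> (\<forall>j\<in>{0..i}. \<not> (c i < c j \<and> c j < m))"
    unfolding admissible_def oc[unfolded c0] disj_img by auto
  also have "\<dots> \<longleftrightarrow> d i < u \<and> (\<forall>j\<in>{0..i}. \<not> (d i < d j \<and> d j < u))"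
    using key1 key2 by auto
  also have "\<dots> \<longleftrightarrow> admissible u v (d i)"
    unfolding admissible_def od[unfolded d0] disj_img by auto
  finally show ?thesis .
qed

end

theorem lemma2p19:
  fixes m n u v k :: nat
  assumes "coprime m n" and "0 < m" and "2 * m < n" and "1 < m"
    and "is_LFP m n u v"
    and "k \<le> m - 2" and "k \<notin> Rset m n"
  shows "admissible m n k \<longleftrightarrow> admissible u v (psi m n k)"
proof -
  have key: "m * v = u * n + 1" using farey assms by blast
  have Lc: "coprime u v" "0 < v" "v \<le> n" "2*u \<le> v"
    using assms(5) unfolding is_LFP_def by blast+
  have u1: "1 \<le> u"
  proof (rule ccontr)
    assume "\<not> 1 \<le> u" hence "m * v = 1" using key by simp
    thus False using assms(4) by simp
  qed
  have vn: "v < n"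
  proof (rule ccontr)
    assume "\<not> v < n" hence "v = n" using Lc by simp
    hence "(m * n) mod n = (u * n + 1) mod n" using key by simp
    also have "\<dots> = 1 mod n" by (rule mod_mult_self3)
    also have "\<dots> = 1" using assms(3) assms(4) by simp
    finally show False by simp
  qed
  interpret S m n u v using key u1 Lc vn assms by unfold_locales auto
  have kn: "k < n" using assms by simp
  hence "k \<in> c ` {..<n}" using c_img by simp
  moreover have "{..<n} = {..<v} \<union> {v..n-1}" using vn by auto
  ultimately have "k \<in> c ` {..<v}" using assms(7) Rset_eq by auto
  then obtain i where iv: "i < v" and ki: "k = c i" by auto
  have "i \<noteq> v - 1" using ki c_vm1 assms(6) assms(4) by auto
  thus ?thesis using adm_c iv ki psi_c by simp
qed


end
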